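(* For every integer $k\ge7$, $c_{n_k^*}\ge\frac14+\frac{1}{8(n_k^* )^{2/3}-4}$, where $$n_k^*=2k+2\sum_{i=1}^{\lfloor\sqrt{k/2}\rfloor}\left(2\left\lfloor\frac{2k-2i^2-i}{2}\right\rfloor+i\right).$$
   Context: A weighted digraph $D=(V,A,w)$ is a digraph without loops or parallel arcs (opposite arcs allowed) with weights $w:A\to\mathbb{R}_{\ge0}$; $w(D)$ is the total arc weight. For a partition $(X,Y)$ of $V$, $w(X,Y)$ is the total weight of arcs from $X$ to $Y$, and $\mathrm{mac}(D)=\max_{(X,Y)}w(X,Y)$. For an integer $\nu\ge1$, $c_\nu$ is the supremum of reals $c\ge0$ such that every acyclic weighted digraph $D$ whose longest directed path has exactly $\nu$ vertices satisfies $\mathrm{mac}(D)\ge c\cdot w(D)$. *)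

theory Defs
  imports Complex_Main
begin

text \<open>No loops; parallel arcs are excluded
automatically since A is a set of ordered pairs; opposite arcs are allowed.\<close>

definition weighted_digraph :: "nat set \<Rightarrow> (nat \<times> nat) set \<Rightarrow> (nat \<times> nat \<Rightarrow> real) \<Rightarrow> bool" where
  "weighted_digraph V A w \<longleftrightarrow> finite V \<and> A \<subseteq> V \<times> V \<and> (\<forall>x. (x, x) \<notin> A)
     \<and> (\<forall>a\<in>A. w a \<ge> 0)"

definition total_weight :: "(nat \<times> nat) set \<Rightarrow> (nat \<times> nat \<Rightarrow> real) \<Rightarrow> real" where
  "total_weight A w = (\<Sum>a\<in>A. w a)"

definition cut_weight :: "(nat \<times> nat) set \<Rightarrow> (nat \<times> nat \<Rightarrow> real) \<Rightarrow> nat set \<Rightarrow> nat set \<Rightarrow> real" where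
  "cut_weight A w X Y = (\<Sum>a\<in>A \<inter> (X \<times> Y). w a)"

definition mac :: "nat set \<Rightarrow> (nat \<times> nat) set \<Rightarrow> (nat \<times> nat \<Rightarrow> real) \<Rightarrow> real" where
  "mac V A w = Max ((\<lambda>X. cut_weight A w X (V - X)) ` Pow V)"

definition is_dipath :: "nat set \<Rightarrow> (nat \<times> nat) set \<Rightarrow> nat list \<Rightarrow> bool" where
  "is_dipath V A p \<longleftrightarrow> p \<noteq> [] \<and> set p \<subseteq> V \<and> distinct p
     \<and> (\<forall>i. Suc i < length p \<longrightarrow> (p ! i, p ! Suc i) \<in> A)"

definition longest_path_has :: "nat set \<Rightarrow> (nat \<times> nat) set \<Rightarrow> nat \<Rightarrow> bool" where
  "longest_path_has V A \<nu> \<longleftrightarrow> (\<exists>p. is_dipath V A p \<and> length p = \<nu>)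
     \<and> (\<forall>p. is_dipath V A p \<longrightarrow> length p \<le> \<nu>)"

definition c_const :: "nat \<Rightarrow> real" where
  "c_const \<nu> = Sup {c. c \<ge> 0 \<and> (\<forall>V A w. weighted_digraph V A w \<and> acyclic A
      \<and> longest_path_has V A \<nu> \<longrightarrow> mac V A w \<ge> c * total_weight A w)}"

definition nstar :: "nat \<Rightarrow> nat" where
  "nstar k = nat (2 * int k + 2 * (\<Sum>i = 1..nat \<lfloor>sqrt (real k / 2)\<rfloor>.
       2 * ((2 * int k - 2 * int i ^ 2 - int i) div 2) + int i))"

end

theory Submission
  imports Defs "HOL-Library.FuncSet"
begin


lemma dipath_trancl:
  assumes "is_dipath V A p" "i < j" "j < length p"
  shows "(p!i, p!j) \<in> A\<^sup>+"
  using assms(2,3)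
proof (induction j)
  case 0 then show ?case by simp
next
  case (Suc j)
  have arc: "(p!j, p!Suc j) \<in> A" using assms(1) Suc.prems unfolding is_dipath_def by blast
  show ?case
  proof (cases "i = j")
    case True then show ?thesis using arc by auto
  next
    case False
    then have "(p!i, p!j) \<in> A\<^sup>+" using Suc by auto
    then show ?thesis using arc by (meson trancl_into_trancl)
  qed
qed

lemma dipath_snoc:
  assumes p: "is_dipath V A p" and ac: "acyclic A" and arc: "(last p, v) \<in> A" and vV: "v \<in> V"
  shows "is_dipath V A (p @ [v])"
proof -
  have pne: "p \<noteq> []" using p unfolding is_dipath_def by auto
  let ?n = "length p - 1"
  have lastn: "last p = p ! ?n" using pne by (simp add: last_conv_nth)
  have vnot: "v \<notin> set p"
  proof
    assume "v \<in> set p"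
    then obtain i where i: "i < length p" "p ! i = v" by (auto simp: in_set_conv_nth)
    show False
    proof (cases "i = ?n")
      case True
      then have "(v, v) \<in> A" using arc lastn i by simp
      then have "(v,v) \<in> A\<^sup>+" by auto
      then show False using ac unfolding acyclic_def by blast
    next
      case False
      then have "i < ?n" using i by linarith
      then have "(p!i, p!?n) \<in> A\<^sup>+" using dipath_trancl[OF p] pne by simp
      then have "(v, last p) \<in> A\<^sup>+" using i lastn by simp
      then have "(v,v) \<in> A\<^sup>+" using arc by (meson trancl_into_trancl)
      then show False using ac unfolding acyclic_def by blast
    qed
  qed
  have arcs: "\<forall>i. Suc i < length (p @ [v]) \<longrightarrow> ((p @ [v]) ! i, (p @ [v]) ! Suc i) \<in> A"
  proof (intro allI impI)
    fix i assume "Suc i < length (p @ [v])"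
    then consider "Suc i < length p" | "Suc i = length p" by fastforce
    then show "((p @ [v]) ! i, (p @ [v]) ! Suc i) \<in> A"
    proof cases
      case 1 then show ?thesis using p unfolding is_dipath_def by (simp add: nth_append)
    next
      case 2
      then have "i = ?n" by simp
      then show ?thesis using 2 arc lastn by (simp add: nth_append)
    qed
  qed
  show ?thesis using p vnot vV arcs unfolding is_dipath_def by auto
qed

definition Lv :: "nat set \<Rightarrow> (nat \<times> nat) set \<Rightarrow> nat \<Rightarrow> nat" where
  "Lv V A v = Max {n. \<exists>p. is_dipath V A p \<and> last p = v \<and> length p = n}"

lemma Lv_props:
  assumes bnd: "\<forall>p. is_dipath V A p \<longrightarrow> length p \<le> N" and vV: "v \<in> V"
  shows "1 \<le> Lv V A v" "Lv V A v \<le> N"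
    "\<exists>p. is_dipath V A p \<and> last p = v \<and> length p = Lv V A v"
    "\<And>p. is_dipath V A p \<Longrightarrow> last p = v \<Longrightarrow> length p \<le> Lv V A v"
proof -
  let ?S = "{n. \<exists>p. is_dipath V A p \<and> last p = v \<and> length p = n}"
  have fin: "finite ?S" by (rule finite_subset[of _ "{..N}"]) (use bnd in auto)
  have one: "1 \<in> ?S" using vV by (auto simp: is_dipath_def intro!: exI[of _ "[v]"])
  then have ne: "?S \<noteq> {}" by auto
  show "1 \<le> Lv V A v" unfolding Lv_def using Max_ge[OF fin one] .
  show "Lv V A v \<le> N" unfolding Lv_def using Max_in[OF fin ne] bnd by auto
  show "\<exists>p. is_dipath V A p \<and> last p = v \<and> length p = Lv V A v"
    unfolding Lv_def using Max_in[OF fin ne] by auto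
  show "\<And>p. is_dipath V A p \<Longrightarrow> last p = v \<Longrightarrow> length p \<le> Lv V A v"
    unfolding Lv_def using fin by (auto intro!: Max_ge)
qed

lemma Lv_arc:
  assumes wd: "weighted_digraph V A w" and ac: "acyclic A"
    and bnd: "\<forall>p. is_dipath V A p \<longrightarrow> length p \<le> N" and a: "(u, v) \<in> A"
  shows "Lv V A u < Lv V A v"
proof -
  have uv: "u \<in> V" "v \<in> V" using wd a unfolding weighted_digraph_def by auto
  obtain p where p: "is_dipath V A p" "last p = u" "length p = Lv V A u"
    using Lv_props(3)[OF bnd uv(1)] by blast
  have "is_dipath V A (p @ [v])" using dipath_snoc[OF p(1) ac _ uv(2)] a p(2) by simp
  then have "length (p @ [v]) \<le> Lv V A v" using Lv_props(4)[OF bnd uv(2), of "p @ [v]"] by simp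
  then show ?thesis using p(3) by simp
qed

lemma averaging:
  fixes F :: "'f set" and sel :: "'f \<Rightarrow> nat \<Rightarrow> bool" and c :: real
  assumes wd: "weighted_digraph V A w" and ac: "acyclic A"
    and bnd: "\<forall>p. is_dipath V A p \<longrightarrow> length p \<le> N"
    and finF: "finite F" and neF: "F \<noteq> {}"
    and hc: "\<And>i j. i < j \<Longrightarrow> j < N \<Longrightarrow> c * card F \<le> card {f\<in>F. sel f i \<and> \<not> sel f j}"
  shows "c * total_weight A w \<le> mac V A w"
proof -
  define lev where "lev v = Lv V A v - 1" for v
  have finV: "finite V" and AV: "A \<subseteq> V \<times> V" and wnn: "\<And>a. a \<in> A \<Longrightarrow> w a \<ge> 0"
    using wd unfolding weighted_digraph_def by auto
  have finA: "finite A" using finite_subset[OF AV] finV by auto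
  have levarc: "lev u < lev v" "lev v < N" if "(u,v) \<in> A" for u v
  proof -
    have uv: "u \<in> V" "v \<in> V" using AV that by auto
    show "lev u < lev v" using Lv_arc[OF wd ac bnd that] Lv_props(1)[OF bnd uv(1)] unfolding lev_def by linarith
    show "lev v < N" using Lv_props(1,2)[OF bnd uv(2)] unfolding lev_def by linarith
  qed
  define X where "X f = {v\<in>V. sel f (lev v)}" for f
  define P where "P f a = (sel f (lev (fst a)) \<and> \<not> sel f (lev (snd a)))" for f a
  have fin_img: "finite ((\<lambda>X. cut_weight A w X (V - X)) ` Pow V)" using finV by simp
  have macge: "cut_weight A w (X f) (V - X f) \<le> mac V A w" for f
    unfolding mac_def by (rule Max_ge[OF fin_img]) (auto simp: X_def)
  have cut_eq: "cut_weight A w (X f) (V - X f) = (\<Sum>a\<in>A. if P f a then w a else 0)" for f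
  proof -
    have "cut_weight A w (X f) (V - X f) = (\<Sum>a\<in>A. if a \<in> X f \<times> (V - X f) then w a else 0)"
      unfolding cut_weight_def by (rule sum.inter_restrict[OF finA])
    also have "\<dots> = (\<Sum>a\<in>A. if P f a then w a else 0)"
      by (rule sum.cong) (use AV in \<open>auto simp: X_def P_def\<close>)
    finally show ?thesis .
  qed
  have "(\<Sum>f\<in>F. cut_weight A w (X f) (V - X f)) = (\<Sum>f\<in>F. \<Sum>a\<in>A. if P f a then w a else 0)"
    using cut_eq by simp
  also have "\<dots> = (\<Sum>a\<in>A. \<Sum>f\<in>F. if P f a then w a else 0)" by (rule sum.swap)
  also have "\<dots> = (\<Sum>a\<in>A. w a * card {f\<in>F. P f a})"
  proof (rule sum.cong)
    fix a assume "a \<in> A"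
    have "(\<Sum>f\<in>F. if P f a then w a else 0) = (\<Sum>f\<in>{f\<in>F. P f a}. w a)"
      by (rule sum.inter_filter[symmetric, OF finF])
    also have "\<dots> = w a * card {f\<in>F. P f a}" by simp
    finally show "(\<Sum>f\<in>F. if P f a then w a else 0) = w a * card {f\<in>F. P f a}" .
  qed simp
  also have "\<dots> \<ge> (\<Sum>a\<in>A. w a * (c * card F))"
  proof (rule sum_mono)
    fix a assume aA: "a \<in> A"
    obtain u v where a: "a = (u,v)" by force
    have "c * card F \<le> card {f\<in>F. P f a}"
      using hc[OF levarc[of u v]] aA a unfolding P_def by auto
    then show "w a * (c * card F) \<le> w a * card {f\<in>F. P f a}"
      using wnn[OF aA] by (rule mult_left_mono)
  qed
  finally have low: "(\<Sum>a\<in>A. w a * (c * card F)) \<le> (\<Sum>f\<in>F. cut_weight A w (X f) (V - X f))" .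
  have up: "(\<Sum>f\<in>F. cut_weight A w (X f) (V - X f)) \<le> card F * mac V A w"
    using sum_mono[of F "\<lambda>f. cut_weight A w (X f) (V - X f)" "\<lambda>_. mac V A w", OF macge] by simp
  have "(\<Sum>a\<in>A. w a * (c * card F)) = card F * (c * total_weight A w)"
    unfolding total_weight_def by (simp add: sum_distrib_left sum_distrib_right mult_ac)
  then have "card F * (c * total_weight A w) \<le> card F * mac V A w" using low up by linarith
  moreover have "card F > 0" using finF neF by (simp add: card_gt_0_iff)
  ultimately show ?thesis by simp
qed



lemma mac_le_total:
  assumes wd: "weighted_digraph V A w"
  shows "mac V A w \<le> total_weight A w"
proof -
  have finV: "finite V" and AV: "A \<subseteq> V \<times> V" and wnn: "\<And>a. a \<in> A \<Longrightarrow> w a \<ge> 0"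
    using wd unfolding weighted_digraph_def by auto
  have finA: "finite A" using finite_subset[OF AV] finV by auto
  have "cut_weight A w X (V - X) \<le> total_weight A w" for X
    unfolding cut_weight_def total_weight_def
    by (rule sum_mono2[OF finA]) (auto intro: wnn)
  then show ?thesis unfolding mac_def using finV by (auto intro!: Max.boundedI)
qed

lemma c_const_ge:
  fixes c :: real
  assumes nu: "\<nu> \<ge> 2" and c0: "c \<ge> 0"
    and H: "\<And>V A w. weighted_digraph V A w \<Longrightarrow> acyclic A \<Longrightarrow> longest_path_has V A \<nu>
       \<Longrightarrow> c * total_weight A w \<le> mac V A w"
  shows "c \<le> c_const \<nu>"
proof -
  let ?S = "{c. c \<ge> 0 \<and> (\<forall>V A w. weighted_digraph V A w \<and> acyclic A
      \<and> longest_path_has V A \<nu> \<longrightarrow> mac V A w \<ge> c * total_weight A w)}"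
  have mem: "c \<in> ?S" using c0 H by blast
  define V where "V = {..<\<nu>}"
  define A where "A = {(i, Suc i) | i. Suc i < \<nu>}"
  define w :: "nat \<times> nat \<Rightarrow> real" where "w a = (if a = (0,1) then 1 else 0)" for a
  have wd: "weighted_digraph V A w" unfolding weighted_digraph_def V_def A_def w_def by auto
  have finA: "finite A" using wd unfolding weighted_digraph_def
    by (meson finite_SigmaI finite_subset)
  have tw: "total_weight A w = 1"
  proof -
    have "total_weight A w = (\<Sum>a\<in>A. if a = (0,1) then 1 else 0)" unfolding total_weight_def w_def by simp
    also have "\<dots> = 1" using finA nu by (simp add: sum.delta A_def)
    finally show ?thesis .
  qed
  have ac: "acyclic A"
  proof -
    have "(x,y) \<in> A\<^sup>+ \<Longrightarrow> x < y" for x y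
      by (induction rule: trancl.induct) (auto simp: A_def)
    then show ?thesis unfolding acyclic_def by blast
  qed
  have lp: "longest_path_has V A \<nu>"
    unfolding longest_path_has_def
  proof (intro conjI allI impI)
    show "\<exists>p. is_dipath V A p \<and> length p = \<nu>"
      using nu by (intro exI[of _ "[0..<\<nu>]"]) (auto simp: is_dipath_def V_def A_def)
    fix p assume "is_dipath V A p"
    then have "distinct p" "set p \<subseteq> {..<\<nu>}" unfolding is_dipath_def V_def by auto
    then show "length p \<le> \<nu>" using card_mono[of "{..<\<nu>}" "set p"] distinct_card[of p] by auto
  qed
  have bdd: "bdd_above ?S"
  proof (rule bdd_aboveI[of _ 1])
    fix x assume "x \<in> ?S"
    then have "x * total_weight A w \<le> mac V A w" using wd ac lp by blast
    then show "x \<le> 1" using mac_le_total[OF wd] tw by simp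
  qed
  show ?thesis unfolding c_const_def using cSup_upper[OF mem bdd] .
qed



lemma card_subsets_with:
  assumes finD: "finite D" and iD: "i \<notin> D" and r: "1 \<le> r"
  shows "card {S. S \<subseteq> insert i D \<and> card S = r \<and> i \<in> S} = card D choose (r - 1)"
proof -
  have eq: "{S. S \<subseteq> insert i D \<and> card S = r \<and> i \<in> S} = insert i ` {S. S \<subseteq> D \<and> card S = r - 1}"
  proof (intro set_eqI iffI)
    fix S assume S: "S \<in> {S. S \<subseteq> insert i D \<and> card S = r \<and> i \<in> S}"
    then have "S - {i} \<subseteq> D" "card (S - {i}) = r - 1" by auto
    moreover have "S = insert i (S - {i})" using S by auto
    ultimately show "S \<in> insert i ` {S. S \<subseteq> D \<and> card S = r - 1}" by blast
  next
    fix S assume "S \<in> insert i ` {S. S \<subseteq> D \<and> card S = r - 1}"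
    then obtain S' where S': "S' \<subseteq> D" "card S' = r - 1" "S = insert i S'" by auto
    have "finite S'" using S'(1) finD finite_subset by blast
    moreover have "i \<notin> S'" using S'(1) iD by auto
    ultimately have "card S = r" using S' r by simp
    then show "S \<in> {S. S \<subseteq> insert i D \<and> card S = r \<and> i \<in> S}" using S' by auto
  qed
  have inj: "inj_on (insert i) {S. S \<subseteq> D \<and> card S = r - 1}"
  proof (rule inj_onI)
    fix x y assume xy: "x \<in> {S. S \<subseteq> D \<and> card S = r - 1}" "y \<in> {S. S \<subseteq> D \<and> card S = r - 1}"
      "insert i x = insert i y"
    have "i \<notin> x" "i \<notin> y" using xy iD by auto
    then show "x = y" using xy(3) by (metis Diff_insert_absorb)
  qed
  show ?thesis unfolding eq card_image[OF inj] using n_subsets[OF finD] by simp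
qed

lemma card_in:
  assumes "finite B" "i \<in> B" "1 \<le> r"
  shows "card {S. S \<subseteq> B \<and> card S = r \<and> i \<in> S} = (card B - 1) choose (r - 1)"
proof -
  have e: "insert i (B - {i}) = B" using assms by auto
  have "card {S. S \<subseteq> B \<and> card S = r \<and> i \<in> S} = card (B - {i}) choose (r - 1)"
    using card_subsets_with[of "B - {i}" i r] assms unfolding e by simp
  then show ?thesis using assms by simp
qed

lemma card_out:
  assumes "finite B" "j \<in> B"
  shows "card {S. S \<subseteq> B \<and> card S = r \<and> j \<notin> S} = (card B - 1) choose r"
proof -
  have "{S. S \<subseteq> B \<and> card S = r \<and> j \<notin> S} = {S. S \<subseteq> B - {j} \<and> card S = r}" by auto
  then show ?thesis using n_subsets[of "B - {j}" r] assms by simp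
qed

lemma card_in_out:
  assumes "finite B" "i \<in> B" "j \<in> B" "i \<noteq> j" "1 \<le> r"
  shows "card {S. S \<subseteq> B \<and> card S = r \<and> i \<in> S \<and> j \<notin> S} = (card B - 2) choose (r - 1)"
proof -
  have "{S. S \<subseteq> B \<and> card S = r \<and> i \<in> S \<and> j \<notin> S} = {S. S \<subseteq> B - {j} \<and> card S = r \<and> i \<in> S}"
    by auto
  moreover have "card {S. S \<subseteq> B - {j} \<and> card S = r \<and> i \<in> S} = (card (B - {j}) - 1) choose (r - 1)"
    using card_in[of "B - {j}" i r] assms by simp
  moreover have "card (B - {j}) - 1 = card B - 2" using assms by (simp add: card_Diff_singleton)
  ultimately show ?thesis by simp
qed

lemma binom_in:
  assumes "1 \<le> r" shows "real ((b - 1) choose (r - 1)) * b = real (b choose r) * r"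
proof -
  have "r * (b choose r) = b * ((b - 1) choose (r - 1))" using times_binomial_minus1_eq[of r b] assms by simp
  then have "real (r * (b choose r)) = real (b * ((b - 1) choose (r - 1)))" by (rule arg_cong)
  then show ?thesis unfolding of_nat_mult by (simp only: mult.commute)
qed

lemma binom_out: "real ((b - 1) choose r) * b = real (b choose r) * (real b - real r)"
proof (cases "r \<le> b")
  case True
  then have "real (b choose r) * (real b - real r) = real ((b - r) * (b choose r))" by (simp add: of_nat_diff)
  also have "\<dots> = real (b * ((b - 1) choose r))" using binomial_absorb_comp[of b r] by simp
  finally show ?thesis by simp
next
  case False
  then show ?thesis by (simp add: binomial_eq_0)
qed

lemma binom_within_nat:
  assumes "1 \<le> r" "r < b"
  shows "(b choose r) * (r * (b - r)) = ((b - 2) choose (r - 1)) * (b * (b - 1))"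
proof -
  define X where "X = b choose r"
  define Y where "Y = (b - 1) choose (r - 1)"
  define Z where "Z = (b - 2) choose (r - 1)"
  have e2: "r * X = b * Y" unfolding X_def Y_def using times_binomial_minus1_eq[of r b] assms by simp
  have e1: "(b - 1 - (r - 1)) * ((b - 1) choose (r - 1)) = (b - 1) * ((b - 1 - 1) choose (r - 1))"
    by (rule binomial_absorb_comp)
  have "b - 1 - (r - 1) = b - r" using assms by simp
  moreover have "b - 1 - 1 = b - 2" by simp
  ultimately have e1n: "(b - r) * Y = (b - 1) * Z" using e1 by (simp add: Y_def Z_def)
  have "X * (r * (b - r)) = (r * X) * (b - r)" by (simp only: ac_simps)
  also have "\<dots> = b * ((b - r) * Y)" unfolding e2 by (simp only: ac_simps)
  also have "\<dots> = Z * (b * (b - 1))" unfolding e1n by (simp only: ac_simps)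
  finally show ?thesis unfolding X_def Z_def .
qed

lemma binom_within:
  assumes "1 \<le> r" "r < b"
  shows "real ((b - 2) choose (r - 1)) * (real b * (real b - 1)) = real (b choose r) * (real r * (real b - real r))"
proof -
  have h: "real ((b choose r) * (r * (b - r))) = real (((b - 2) choose (r - 1)) * (b * (b - 1)))"
    using binom_within_nat[OF assms] by (rule arg_cong)
  have d: "real (b - r) = real b - real r" "real (b - 1) = real b - 1" using assms by (auto simp: of_nat_diff)
  show ?thesis using h unfolding of_nat_mult d by (rule sym)
qed

lemma prod_two:
  assumes "finite I" "t \<in> I" "u \<in> I" "t \<noteq> u"
  shows "prod g I = g t * g u * prod g (I - {t} - {u})"
proof -
  have "prod g I = g t * prod g (I - {t})" using assms by (simp add: prod.remove)
  also have "prod g (I - {t}) = g u * prod g (I - {t} - {u})" using assms by (simp add: prod.remove)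
  finally show ?thesis by (simp add: mult.assoc)
qed

lemma prod_one:
  assumes "finite I" "t \<in> I"
  shows "prod g I = g t * prod g (I - {t})"
  using assms by (simp add: prod.remove)



lemma ratio_le:
  fixes x y p q c :: real
  assumes "x * p = y * q" "p > 0" "c * p \<le> q" "y \<ge> 0"
  shows "c * y \<le> x"
proof -
  have "y * (c * p) \<le> y * q" using assms(3,4) by (rule mult_left_mono)
  then have "(c * y) * p \<le> x * p" using assms(1) by (simp add: mult_ac)
  then show ?thesis using assms(2) by simp
qed

definition st :: "(nat \<Rightarrow> nat) \<Rightarrow> nat \<Rightarrow> nat" where "st bs t = (\<Sum>u<t. bs u)"
definition blk :: "(nat \<Rightarrow> nat) \<Rightarrow> nat \<Rightarrow> nat" where "blk bs x = (LEAST t. x < st bs (Suc t))"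

lemma blk_props:
  assumes "x < st bs T"
  shows "blk bs x < T" "st bs (blk bs x) \<le> x" "x < st bs (Suc (blk bs x))"
proof -
  have T: "T \<ge> 1" using assms by (cases T) (auto simp: st_def)
  have ex: "x < st bs (Suc (T - 1))" using assms T by simp
  show "x < st bs (Suc (blk bs x))" unfolding blk_def by (rule LeastI[of _ "T - 1"]) (rule ex)
  have "blk bs x \<le> T - 1" unfolding blk_def by (rule Least_le) (rule ex)
  then show "blk bs x < T" using T by linarith
  show "st bs (blk bs x) \<le> x"
  proof (cases "blk bs x")
    case 0 then show ?thesis by (simp add: st_def)
  next
    case (Suc t)
    then have "t < (LEAST t. x < st bs (Suc t))" unfolding blk_def by simp
    then have "\<not> x < st bs (Suc t)" by (rule not_less_Least)
    then show ?thesis using Suc by simp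
  qed
qed

lemma blk_mono:
  assumes "i \<le> j" "j < st bs T"
  shows "blk bs i \<le> blk bs j"
proof -
  have "i < st bs (Suc (blk bs j))" using blk_props(3)[OF assms(2)] assms(1) by linarith
  then show ?thesis unfolding blk_def by (rule Least_le)
qed

lemma block_family:
  fixes bs r :: "nat \<Rightarrow> nat" and c :: real and T :: nat
  assumes rb: "\<And>t. t < T \<Longrightarrow> 1 \<le> r t \<and> r t < bs t"
    and W: "\<And>t. t < T \<Longrightarrow> c * (real (bs t) * (real (bs t) - 1)) \<le> real (r t) * (real (bs t) - real (r t))"
    and X: "\<And>t u. t < u \<Longrightarrow> u < T \<Longrightarrow> c * (real (bs t) * real (bs u)) \<le> real (r t) * (real (bs u) - real (r u))"
  shows "\<exists>F :: (nat \<Rightarrow> nat set) set. \<exists>sel. finite F \<and> F \<noteq> {} \<and>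
     (\<forall>i j. i < j \<longrightarrow> j < st bs T \<longrightarrow> c * card F \<le> card {f\<in>F. sel f i \<and> \<not> sel f j})"
proof -
  define I where "I = {..<T}"
  define Blk where "Blk t = {st bs t..<st bs (Suc t)}" for t
  define C where "C t = {S. S \<subseteq> Blk t \<and> card S = r t}" for t
  define F where "F = PiE I C"
  define sel where "sel f x = (x \<in> f (blk bs x))" for f :: "nat \<Rightarrow> nat set" and x
  have finI: "finite I" unfolding I_def by simp
  have cardBlk: "card (Blk t) = bs t" for t unfolding Blk_def st_def by simp
  have finBlk: "finite (Blk t)" for t unfolding Blk_def by simp
  have cardC: "card (C t) = bs t choose r t" for t unfolding C_def using n_subsets[OF finBlk] cardBlk by simp
  have finC: "finite (C t)" for t unfolding C_def using finBlk by (auto intro: finite_subset[of _ "Pow (Blk t)"])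
  have finF: "finite F" unfolding F_def using finI finC by (intro finite_PiE) auto
  have cardF: "card F = (\<Prod>t\<in>I. card (C t))" unfolding F_def using finI by (rule card_PiE)
  have Cpos: "card (C t) > 0" if "t \<in> I" for t using rb[of t] that unfolding cardC I_def by simp
  have "card F > 0" unfolding cardF using Cpos finI by (simp add: prod_pos)
  then have neF: "F \<noteq> {}" by auto
  have inblk: "x \<in> Blk (blk bs x)" "blk bs x \<in> I" if "x < st bs T" for x
    using blk_props[OF that] unfolding Blk_def I_def by auto
  have main: "c * card F \<le> card {f\<in>F. sel f i \<and> \<not> sel f j}" if ij: "i < j" "j < st bs T" for i j
  proof -
    define t where "t = blk bs i"
    define u where "u = blk bs j"
    have iT: "i < st bs T" using ij by simp
    have tu: "t \<le> u" unfolding t_def u_def using blk_mono[OF _ ij(2)] ij(1) by simp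
    have tI: "t \<in> I" and iB: "i \<in> Blk t" using inblk[OF iT] unfolding t_def by auto
    have uI: "u \<in> I" and jB: "j \<in> Blk u" using inblk[OF ij(2)] unfolding u_def by auto
    have tT: "t < T" "u < T" using tI uI unfolding I_def by auto
    show ?thesis
    proof (cases "t = u")
      case True
      define D where "D = {S \<in> C t. i \<in> S \<and> j \<notin> S}"
      have ev: "{f\<in>F. sel f i \<and> \<not> sel f j} = PiE I (C(t := D))"
      proof (rule set_eqI)
        fix f
        show "f \<in> {f\<in>F. sel f i \<and> \<not> sel f j} \<longleftrightarrow> f \<in> PiE I (C(t := D))"
          unfolding F_def sel_def PiE_iff mem_Collect_eq fun_upd_apply D_def
          using tI True unfolding t_def[symmetric] u_def[symmetric] by auto
      qed
      define R where "R = (\<Prod>x\<in>I - {t}. card (C x))"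
      have rest: "(\<Prod>x\<in>I - {t}. card ((C(t := D)) x)) = R" unfolding R_def by (rule prod.cong) auto
      have cev: "card {f\<in>F. sel f i \<and> \<not> sel f j} = card D * R"
        unfolding ev card_PiE[OF finI] prod_one[OF finI tI, of "\<lambda>x. card ((C(t := D)) x)"] rest by simp
      have cF: "card F = card (C t) * R" unfolding cardF R_def using prod_one[OF finI tI] .
      have rt: "1 \<le> r t" "r t < bs t" using rb[OF tT(1)] by auto
      have cD: "card D = (bs t - 2) choose (r t - 1)"
        unfolding D_def C_def mem_Collect_eq conj_assoc using card_in_out[OF finBlk iB, of j "r t"] jB True ij(1) rt cardBlk by auto
      have eq: "real (card D) * (real (bs t) * (real (bs t) - 1)) = real (card (C t)) * (real (r t) * (real (bs t) - real (r t)))"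
        unfolding cD cardC using binom_within[OF rt] .
      have pos: "real (bs t) * (real (bs t) - 1) > 0" using rt by auto
      have "c * card (C t) \<le> card D" by (rule ratio_le[OF eq pos W[OF tT(1)]]) simp
      then have "c * card (C t) * R \<le> card D * R" by (simp add: mult_right_mono)
      then show ?thesis unfolding cev cF by (simp add: mult_ac)
    next
      case False
      then have tu': "t < u" using tu by simp
      define D1 where "D1 = {S \<in> C t. i \<in> S}"
      define D2 where "D2 = {S \<in> C u. j \<notin> S}"
      have ev: "{f\<in>F. sel f i \<and> \<not> sel f j} = PiE I (C(t := D1, u := D2))"
      proof (rule set_eqI)
        fix f
        show "f \<in> {f\<in>F. sel f i \<and> \<not> sel f j} \<longleftrightarrow> f \<in> PiE I (C(t := D1, u := D2))"
          unfolding F_def sel_def PiE_iff mem_Collect_eq fun_upd_apply D1_def D2_def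
          using tI uI False unfolding t_def[symmetric] u_def[symmetric] by auto
      qed
      define R where "R = (\<Prod>x\<in>I - {t} - {u}. card (C x))"
      have rest: "(\<Prod>x\<in>I - {t} - {u}. card ((C(t := D1, u := D2)) x)) = R" unfolding R_def by (rule prod.cong) auto
      have cev: "card {f\<in>F. sel f i \<and> \<not> sel f j} = card D1 * card D2 * R"
        unfolding ev card_PiE[OF finI] prod_two[OF finI tI uI False, of "\<lambda>x. card ((C(t := D1, u := D2)) x)"] rest
        using False by simp
      have cF: "card F = card (C t) * card (C u) * R" unfolding cardF R_def using prod_two[OF finI tI uI False] .
      have rt: "1 \<le> r t" "r t < bs t" using rb[OF tT(1)] by auto
      have ru: "1 \<le> r u" "r u < bs u" using rb[OF tT(2)] by auto
      have cD1: "card D1 = (bs t - 1) choose (r t - 1)"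
        unfolding D1_def C_def mem_Collect_eq conj_assoc using card_in[OF finBlk iB rt(1)] cardBlk by simp
      have cD2: "card D2 = (bs u - 1) choose (r u)"
        unfolding D2_def C_def mem_Collect_eq conj_assoc using card_out[OF finBlk jB] cardBlk by simp
      have e1: "real (card D1) * bs t = real (card (C t)) * r t" unfolding cD1 cardC by (rule binom_in[OF rt(1)])
      have e2: "real (card D2) * bs u = real (card (C u)) * (real (bs u) - real (r u))" unfolding cD2 cardC by (rule binom_out)
      have eq: "(real (card D1) * real (card D2)) * (real (bs t) * real (bs u))
          = (real (card (C t)) * real (card (C u))) * (real (r t) * (real (bs u) - real (r u)))"
      proof -
        have "(real (card D1) * real (card D2)) * (real (bs t) * real (bs u))
           = (real (card D1) * bs t) * (real (card D2) * bs u)" by (simp add: mult_ac)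
        also have "\<dots> = (real (card (C t)) * r t) * (real (card (C u)) * (real (bs u) - real (r u)))"
          unfolding e1 e2 ..
        finally show ?thesis by (simp add: mult_ac)
      qed
      have pos: "real (bs t) * real (bs u) > 0" using rt ru by auto
      have "c * (card (C t) * card (C u)) \<le> card D1 * card D2"
        using ratio_le[OF eq pos X[OF tu' tT(2)]] by simp
      then have "c * (card (C t) * card (C u)) * R \<le> card D1 * card D2 * R" by (simp add: mult_right_mono)
      then show ?thesis unfolding cev cF by (simp add: mult_ac)
    qed
  qed
  show ?thesis using finF neF main by blast
qed



lemma K_within:
  fixes K x b e :: real
  assumes b: "b = 2*K - 2*x^2 - e" and e: "e = 0 \<or> e = 1" and x: "x \<ge> 1" and xk: "2*x^2 \<le> K"
  shows "K / (2*(2*K-1)) * (b * (b - 1)) \<le> (b + x) * (b - x) / 4"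
proof -
  have "x^2 \<ge> 1" using x by (simp add: one_le_power)
  then have K1: "2*K - 1 > 0" using xk by linarith
  have key: "(2*K - 1) * x^2 \<le> b * (2*K - b)"
  proof (cases "e = 0")
    case True
    have "b * (2*K - b) - (2*K - 1) * x^2 = x^2 * (2*K + 1 - 4*x^2)" unfolding b True by (simp add: algebra_simps power2_eq_square)
    moreover have "x^2 * (2*K + 1 - 4*x^2) \<ge> 0" using xk by simp
    ultimately show ?thesis by linarith
  next
    case False
    then have e1: "e = 1" using e by simp
    have "b * (2*K - b) - (2*K - 1) * x^2 = x^2 * (2*K - 4*x^2) + (2*K - 3*x^2 - 1)"
      unfolding b e1 by (simp add: algebra_simps power2_eq_square)
    moreover have "x^2 * (2*K - 4*x^2) \<ge> 0" using xk by simp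
    moreover have "2*K - 3*x^2 - 1 \<ge> 0" using xk \<open>x^2 \<ge> 1\<close> by linarith
    ultimately show ?thesis by linarith
  qed
  have "K / (2*(2*K-1)) * (b * (b - 1)) = (2*K * (b * (b-1))) / (4*(2*K-1))" using K1 by (simp add: field_simps)
  also have "\<dots> \<le> ((2*K-1) * ((b + x) * (b - x))) / (4*(2*K-1))"
  proof (rule divide_right_mono)
    show "2*K * (b * (b-1)) \<le> (2*K-1) * ((b + x) * (b - x))"
      using key by (simp add: algebra_simps power2_eq_square)
  qed (use K1 in simp)
  also have "\<dots> = (b + x) * (b - x) / 4" using K1 by (simp add: field_simps)
  finally show ?thesis .
qed

lemma K_mid:
  fixes K x b :: real
  assumes "b \<le> 2*K - 1" "x \<ge> 1" "b \<ge> 0" "K \<ge> 1"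
  shows "K / (2*(2*K-1)) * (b * (2*K)) \<le> (b + x) / 2 * K"
proof -
  have K1: "2*K - 1 > 0" using assms by simp
  have "b * (2*K) \<le> (b + x) * (2*K - 1)"
  proof -
    have "(2*K - 1) * 1 \<le> (2*K-1) * x" using assms K1 by simp
    then show ?thesis using assms by (simp add: algebra_simps)
  qed
  then have "K * (b * (2*K)) \<le> K * ((b + x) * (2*K - 1))" using assms by simp
  then show ?thesis using K1 by (simp add: field_simps)
qed

lemma K_cross:
  fixes K i j bi bj ei ej :: real
  assumes bi: "bi = 2*K - 2*i^2 - ei" and bj: "bj = 2*K - 2*j^2 - ej"
    and ei: "0 \<le> ei" "ei \<le> 1" and ej: "0 \<le> ej" "ej \<le> 1"
    and j: "j \<ge> 1" and ij: "j + 1 \<le> i" and bj0: "bj \<ge> 0" and bi0: "bi \<ge> 0"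
  shows "K / (2*(2*K-1)) * (bi * bj) \<le> (bi + i) * (bj - j) / 4"
proof -
  have i1: "i \<ge> 2" using j ij by simp
  have bik: "bi \<le> 2*K - 1"
  proof -
    have "i^2 \<ge> 1" using i1 by (simp add: one_le_power)
    then show ?thesis using bi ei by linarith
  qed
  have "i^2 \<ge> 1" using i1 by (simp add: one_le_power)
  then have K1: "2*K - 1 > 0" using bi bi0 ei by linarith
  have d1: "bj - bi - i \<ge> 0"
  proof -
    have "i^2 - j^2 = (i - j) * (i + j)" by (simp add: algebra_simps power2_eq_square)
    moreover have "(i - j) * (i + j) \<ge> 1 * (i + j)" using ij j by (intro mult_right_mono) auto
    ultimately have "i^2 - j^2 \<ge> i + j" by simp
    then show ?thesis using bi bj ei ej j i1 by linarith
  qed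
  have claim: "i * bj - j * bi - i * j \<ge> bj"
  proof -
    have p1: "(i - j - 1) * bj \<ge> 0" using ij bj0 by simp
    have p2: "j * (bj - bi - i) \<ge> 0" using d1 j by simp
    have "i * bj - j * bi - i * j - bj = (i - j - 1) * bj + j * (bj - bi - i)" by (simp add: algebra_simps)
    then show ?thesis using p1 p2 by linarith
  qed
  have "(2*K - 1) * bj \<ge> bi * bj" using bik bj0 by (simp add: mult_right_mono)
  then have main: "2*K * (bi * bj) \<le> (2*K - 1) * ((bi + i) * (bj - j))"
  proof -
    have "(2*K - 1) * ((bi + i) * (bj - j)) = (2*K-1) * (bi*bj) + (2*K-1) * (i * bj - j * bi - i * j)"
      by (simp add: algebra_simps)
    moreover have "(2*K-1) * (i * bj - j * bi - i * j) \<ge> (2*K-1) * bj" using claim K1 by simp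
    ultimately show ?thesis using \<open>(2*K - 1) * bj \<ge> bi * bj\<close> by (simp add: algebra_simps)
  qed
  have "K / (2*(2*K-1)) * (bi * bj) = (2*K * (bi * bj)) / (4*(2*K-1))" using K1 by (simp add: field_simps)
  also have "\<dots> \<le> ((2*K - 1) * ((bi + i) * (bj - j))) / (4*(2*K-1))"
    using main K1 by (intro divide_right_mono) auto
  also have "\<dots> = (bi + i) * (bj - j) / 4" using K1 by (simp add: field_simps)
  finally show ?thesis .
qed

lemma K_el:
  fixes K x y bi bj :: real
  assumes "bi \<le> 2*K - 1" "x \<ge> 1" "bi \<ge> 0" "bj \<ge> 0" "y \<ge> 0" "K \<ge> 1"
  shows "K / (2*(2*K-1)) * (bi * bj) \<le> (bi + x) * (bj + y) / 4"
proof -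
  have K1: "2*K - 1 > 0" using assms by simp
  have "bi * (2*K) \<le> (bi + x) * (2*K - 1)"
  proof -
    have "(2*K - 1) * 1 \<le> (2*K-1) * x" using assms K1 by simp
    then show ?thesis using assms by (simp add: algebra_simps)
  qed
  then have "bi * (2*K) * bj \<le> (bi + x) * (2*K - 1) * (bj + y)"
    by (rule mult_mono) (use assms K1 in auto)
  then show ?thesis using K1 by (simp add: field_simps)
qed



definition bb :: "nat \<Rightarrow> nat \<Rightarrow> nat" where "bb k i = 2*k - 2*i^2 - i mod 2"

lemma even_aux: "2*a + 1 \<le> 2*k \<Longrightarrow> even (2*k - 2*a - i mod 2 + i)"
  for a k i :: nat by presburger

lemma even_aux2: "2*a + 1 \<le> 2*k \<Longrightarrow> i \<le> 2*k - 2*a - i mod 2 \<Longrightarrow> even (2*k - 2*a - i mod 2 - i)"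
  for a k i :: nat by presburger

lemma bb_facts:
  assumes i: "1 \<le> i" and ik: "2*i^2 \<le> k" and k: "k \<ge> 7"
  shows "real (bb k i) = 2*real k - 2*(real i)^2 - real (i mod 2)"
    "real (i mod 2) = 0 \<or> real (i mod 2) = 1"
    "i + 3 \<le> bb k i" "k - 1 \<le> bb k i"
    "real ((bb k i + i) div 2) = (real (bb k i) + real i)/2"
    "real ((bb k i - i) div 2) = (real (bb k i) - real i)/2"
    "1 \<le> (bb k i - i) div 2" "(bb k i + i) div 2 < bb k i" "1 \<le> (bb k i + i) div 2" "(bb k i - i) div 2 < bb k i"
proof -
  have m: "i mod 2 \<le> 1" by simp
  have le: "2*i^2 + i mod 2 \<le> 2*k" using ik m k by linarith
  show r: "real (bb k i) = 2*real k - 2*(real i)^2 - real (i mod 2)"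
    unfolding bb_def using le by (simp add: of_nat_diff)
  show "real (i mod 2) = 0 \<or> real (i mod 2) = 1" by (cases "even i") auto
  have "i \<le> i^2" using i by (simp add: power2_eq_square)
  then have "2*i \<le> k" using ik by linarith
  then show b3: "i + 3 \<le> bb k i" unfolding bb_def using ik m k by linarith
  show "k - 1 \<le> bb k i" unfolding bb_def using ik m by linarith
  have e1: "2*i^2 + 1 \<le> 2*k" using ik k by linarith
  have ev1: "even (bb k i + i)" unfolding bb_def by (rule even_aux[OF e1])
  have ev2: "even (bb k i - i)" unfolding bb_def by (rule even_aux2[OF e1]) (use b3 in \<open>simp add: bb_def\<close>)
  have "real (bb k i + i) = 2 * real ((bb k i + i) div 2)" using ev1 by (metis dvd_mult_div_cancel of_nat_mult of_nat_numeral)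
  then show "real ((bb k i + i) div 2) = (real (bb k i) + real i)/2" by simp
  have "real (bb k i - i) = 2 * real ((bb k i - i) div 2)" using ev2 by (metis dvd_mult_div_cancel of_nat_mult of_nat_numeral)
  then show "real ((bb k i - i) div 2) = (real (bb k i) - real i)/2" using b3 by (simp add: of_nat_diff)
  show "1 \<le> (bb k i - i) div 2" using b3 by linarith
  show "(bb k i + i) div 2 < bb k i" using b3 by linarith
  show "1 \<le> (bb k i + i) div 2" using b3 by linarith
  show "(bb k i - i) div 2 < bb k i" using b3 by linarith
qed



abbreviation cc :: "nat \<Rightarrow> real" where "cc k \<equiv> real k / (2*(2*real k - 1))"

lemma W_early:
  assumes "1 \<le> i" "2*i^2 \<le> k" "k \<ge> 7"
  shows "cc k * (real (bb k i) * (real (bb k i) - 1)) \<le> real ((bb k i + i) div 2) * (real (bb k i) - real ((bb k i + i) div 2))"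
proof -
  note f = bb_facts[OF assms]
  have "2*(real i)^2 \<le> real k" using assms(2) by (metis of_nat_le_iff of_nat_mult of_nat_numeral of_nat_power)
  then have "cc k * (real (bb k i) * (real (bb k i) - 1)) \<le> (real (bb k i) + i) * (real (bb k i) - i) / 4"
    using K_within[OF f(1) f(2)] assms(1) by simp
  also have "\<dots> = real ((bb k i + i) div 2) * (real (bb k i) - real ((bb k i + i) div 2))"
    unfolding f(5) by (simp add: field_simps)
  finally show ?thesis .
qed

lemma W_late:
  assumes "1 \<le> i" "2*i^2 \<le> k" "k \<ge> 7"
  shows "cc k * (real (bb k i) * (real (bb k i) - 1)) \<le> real ((bb k i - i) div 2) * (real (bb k i) - real ((bb k i - i) div 2))"
proof -
  note f = bb_facts[OF assms]
  have "2*(real i)^2 \<le> real k" using assms(2) by (metis of_nat_le_iff of_nat_mult of_nat_numeral of_nat_power)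
  then have "cc k * (real (bb k i) * (real (bb k i) - 1)) \<le> (real (bb k i) + i) * (real (bb k i) - i) / 4"
    using K_within[OF f(1) f(2)] assms(1) by simp
  also have "\<dots> = real ((bb k i - i) div 2) * (real (bb k i) - real ((bb k i - i) div 2))"
    unfolding f(6) by (simp add: field_simps)
  finally show ?thesis .
qed

lemma W_mid:
  assumes "k \<ge> 7"
  shows "cc k * (real (2*k) * (real (2*k) - 1)) \<le> real k * (real (2*k) - real k)"
proof -
  have K1: "2*real k - 1 > 0" using assms by simp
  have "cc k * (real (2*k) * (real (2*k) - 1)) = real k * real k" using K1 by (simp add: field_simps)
  then show ?thesis by simp
qed

lemma X_ee:
  assumes "1 \<le> j" "j < i" "2*i^2 \<le> k" "k \<ge> 7"
  shows "cc k * (real (bb k i) * real (bb k j)) \<le> real ((bb k i + i) div 2) * (real (bb k j) - real ((bb k j + j) div 2))"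
proof -
  have "j^2 \<le> i^2" using assms by (simp add: power_mono)
  then have jk: "2*j^2 \<le> k" using assms by linarith
  note fi = bb_facts[OF _ assms(3,4)] and fj = bb_facts[OF assms(1) jk assms(4)]
  have i1: "1 \<le> i" using assms by simp
  have ei: "0 \<le> real (i mod 2)" "real (i mod 2) \<le> 1" using fi(2)[OF i1] by auto
  have ej: "0 \<le> real (j mod 2)" "real (j mod 2) \<le> 1" using fj(2) by auto
  have "cc k * (real (bb k i) * real (bb k j)) \<le> (real (bb k i) + i) * (real (bb k j) - j) / 4"
    by (rule K_cross[OF fi(1)[OF i1] fj(1) ei ej]) (use assms in auto)
  also have "\<dots> = real ((bb k i + i) div 2) * (real (bb k j) - real ((bb k j + j) div 2))"
    unfolding fi(5)[OF i1] fj(5) by (simp add: field_simps)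
  finally show ?thesis .
qed

lemma X_ll:
  assumes "1 \<le> j" "j < l" "2*l^2 \<le> k" "k \<ge> 7"
  shows "cc k * (real (bb k j) * real (bb k l)) \<le> real ((bb k j - j) div 2) * (real (bb k l) - real ((bb k l - l) div 2))"
proof -
  have "j^2 \<le> l^2" using assms by (simp add: power_mono)
  then have jk: "2*j^2 \<le> k" using assms by linarith
  note fi = bb_facts[OF _ assms(3,4)] and fj = bb_facts[OF assms(1) jk assms(4)]
  have i1: "1 \<le> l" using assms by simp
  have ei: "0 \<le> real (l mod 2)" "real (l mod 2) \<le> 1" using fi(2)[OF i1] by auto
  have ej: "0 \<le> real (j mod 2)" "real (j mod 2) \<le> 1" using fj(2) by auto
  have "cc k * (real (bb k l) * real (bb k j)) \<le> (real (bb k l) + l) * (real (bb k j) - j) / 4"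
    by (rule K_cross[OF fi(1)[OF i1] fj(1) ei ej]) (use assms in auto)
  also have "\<dots> = real ((bb k j - j) div 2) * (real (bb k l) - real ((bb k l - l) div 2))"
    unfolding fi(6)[OF i1] fj(6) by (simp add: field_simps)
  finally show ?thesis by (simp add: mult_ac)
qed

lemma X_em:
  assumes "1 \<le> i" "2*i^2 \<le> k" "k \<ge> 7"
  shows "cc k * (real (bb k i) * real (2*k)) \<le> real ((bb k i + i) div 2) * (real (2*k) - real k)"
proof -
  note f = bb_facts[OF assms]
  have "cc k * (real (bb k i) * (2*real k)) \<le> (real (bb k i) + i) / 2 * real k"
  proof (rule K_mid)
    have "(real i)^2 \<ge> 1" using assms(1) by (simp add: one_le_power)
    then show "real (bb k i) \<le> 2 * real k - 1" using f(1) f(2) by linarith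
  qed (use assms in auto)
  also have "\<dots> = real ((bb k i + i) div 2) * (real (2*k) - real k)" unfolding f(5) by simp
  finally show ?thesis by simp
qed

lemma X_ml:
  assumes "1 \<le> j" "2*j^2 \<le> k" "k \<ge> 7"
  shows "cc k * (real (2*k) * real (bb k j)) \<le> real k * (real (bb k j) - real ((bb k j - j) div 2))"
proof -
  note f = bb_facts[OF assms]
  have "cc k * (real (bb k j) * (2*real k)) \<le> (real (bb k j) + j) / 2 * real k"
  proof (rule K_mid)
    have "(real j)^2 \<ge> 1" using assms(1) by (simp add: one_le_power)
    then show "real (bb k j) \<le> 2 * real k - 1" using f(1) f(2) by linarith
  qed (use assms in auto)
  also have "\<dots> = real k * (real (bb k j) - real ((bb k j - j) div 2))" unfolding f(6) by (simp add: field_simps)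
  finally show ?thesis by (simp add: mult_ac)
qed

lemma X_el:
  assumes "1 \<le> i" "2*i^2 \<le> k" "1 \<le> j" "2*j^2 \<le> k" "k \<ge> 7"
  shows "cc k * (real (bb k i) * real (bb k j)) \<le> real ((bb k i + i) div 2) * (real (bb k j) - real ((bb k j - j) div 2))"
proof -
  note fi = bb_facts[OF assms(1,2,5)] and fj = bb_facts[OF assms(3,4,5)]
  have "cc k * (real (bb k i) * real (bb k j)) \<le> (real (bb k i) + i) * (real (bb k j) + j) / 4"
  proof (rule K_el)
    have "(real i)^2 \<ge> 1" using assms(1) by (simp add: one_le_power)
    then show "real (bb k i) \<le> 2 * real k - 1" using fi(1) fi(2) by linarith
  qed (use assms in auto)
  also have "\<dots> = real ((bb k i + i) div 2) * (real (bb k j) - real ((bb k j - j) div 2))"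
    unfolding fi(5) fj(6) by (simp add: field_simps)
  finally show ?thesis .
qed



definition bsz :: "nat \<Rightarrow> nat \<Rightarrow> nat \<Rightarrow> nat" where
  "bsz k s t = (if t < s then bb k (s - t) else if t = s then 2*k else bb k (t - s))"
definition rsz :: "nat \<Rightarrow> nat \<Rightarrow> nat \<Rightarrow> nat" where
  "rsz k s t = (if t < s then (bb k (s - t) + (s - t)) div 2 else if t = s then k
     else (bb k (t - s) - (t - s)) div 2)"

lemma idx_ok: "i \<le> s \<Longrightarrow> 2*s^2 \<le> k \<Longrightarrow> 2*i^2 \<le> (k::nat)"
  using power_mono[of i s 2] by linarith

lemma inst_rb:
  assumes k: "k \<ge> 7" and s: "2*s^2 \<le> k" and t: "t < 2*s+1"
  shows "1 \<le> rsz k s t \<and> rsz k s t < bsz k s t"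
proof -
  consider "t < s" | "t = s" | "s < t" by linarith
  then show ?thesis
  proof cases
    case 1
    have "1 \<le> s - t" "2*(s-t)^2 \<le> k" using 1 idx_ok[OF _ s, of "s - t"] by auto
    note f = bb_facts[OF this k]
    show ?thesis using 1 f(8,9) unfolding bsz_def rsz_def by simp
  next
    case 2 then show ?thesis using k unfolding bsz_def rsz_def by simp
  next
    case 3
    have "1 \<le> t - s" "2*(t-s)^2 \<le> k" using 3 t idx_ok[OF _ s, of "t - s"] by auto
    note f = bb_facts[OF this k]
    show ?thesis using 3 f(7,10) unfolding bsz_def rsz_def by simp
  qed
qed

lemma inst_W:
  assumes k: "k \<ge> 7" and s: "2*s^2 \<le> k" and t: "t < 2*s+1"
  shows "cc k * (real (bsz k s t) * (real (bsz k s t) - 1)) \<le> real (rsz k s t) * (real (bsz k s t) - real (rsz k s t))"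
proof -
  consider "t < s" | "t = s" | "s < t" by linarith
  then show ?thesis
  proof cases
    case 1
    have "1 \<le> s - t" "2*(s-t)^2 \<le> k" using 1 idx_ok[OF _ s, of "s - t"] by auto
    show ?thesis using 1 W_early[OF \<open>1 \<le> s - t\<close> \<open>2*(s-t)^2 \<le> k\<close> k] unfolding bsz_def rsz_def by simp
  next
    case 2 then show ?thesis using W_mid[OF k] unfolding bsz_def rsz_def by simp
  next
    case 3
    have "1 \<le> t - s" "2*(t-s)^2 \<le> k" using 3 t idx_ok[OF _ s, of "t - s"] by auto
    show ?thesis using 3 W_late[OF \<open>1 \<le> t - s\<close> \<open>2*(t-s)^2 \<le> k\<close> k] unfolding bsz_def rsz_def by simp
  qed
qed

lemma inst_X:
  assumes k: "k \<ge> 7" and s: "2*s^2 \<le> k" and tu: "t < u" and u: "u < 2*s+1"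
  shows "cc k * (real (bsz k s t) * real (bsz k s u)) \<le> real (rsz k s t) * (real (bsz k s u) - real (rsz k s u))"
proof -
  consider "u < s" | "t < s" "u = s" | "t < s" "s < u" | "t = s" "s < u" | "s < t" using tu by linarith
  then show ?thesis
  proof cases
    case 1
    have a: "1 \<le> s - u" "s - u < s - t" "2*(s-t)^2 \<le> k" using 1 tu idx_ok[OF _ s, of "s - t"] by auto
    show ?thesis using 1 tu X_ee[OF a k] unfolding bsz_def rsz_def by simp
  next
    case 2
    have a: "1 \<le> s - t" "2*(s-t)^2 \<le> k" using 2 idx_ok[OF _ s, of "s - t"] by auto
    show ?thesis using 2 X_em[OF a k] unfolding bsz_def rsz_def by simp
  next
    case 3
    have a: "1 \<le> s - t" "2*(s-t)^2 \<le> k" "1 \<le> u - s" "2*(u-s)^2 \<le> k"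
      using 3 u idx_ok[OF _ s, of "s - t"] idx_ok[OF _ s, of "u - s"] by auto
    show ?thesis using 3 X_el[OF a k] unfolding bsz_def rsz_def by simp
  next
    case 4
    have a: "1 \<le> u - s" "2*(u-s)^2 \<le> k" using 4 u idx_ok[OF _ s, of "u - s"] by auto
    show ?thesis using 4 X_ml[OF a k] unfolding bsz_def rsz_def by simp
  next
    case 5
    have a: "1 \<le> t - s" "t - s < u - s" "2*(u-s)^2 \<le> k" using 5 tu u idx_ok[OF _ s, of "u - s"] by auto
    show ?thesis using 5 tu X_ll[OF a k] unfolding bsz_def rsz_def by simp
  qed
qed

lemma inst_sum: "st (bsz k s) (2*s+1) = 2*k + 2*(\<Sum>i=1..s. bb k i)"
proof -
  have "st (bsz k s) (2*s+1) = sum (bsz k s) {0..<2*s+1}" unfolding st_def by (simp add: lessThan_atLeast0)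
  also have "\<dots> = sum (bsz k s) {0..<s} + sum (bsz k s) {s..<2*s+1}"
    by (rule sum.atLeastLessThan_concat[symmetric]) auto
  also have "sum (bsz k s) {s..<2*s+1} = bsz k s s + sum (bsz k s) {Suc s..<2*s+1}"
    by (rule sum.atLeast_Suc_lessThan) simp
  also have "sum (bsz k s) {0..<s} = (\<Sum>i=1..s. bb k i)"
    by (rule sum.reindex_bij_witness[of _ "\<lambda>i. s - i" "\<lambda>t. s - t"]) (auto simp: bsz_def)
  also have "sum (bsz k s) {Suc s..<2*s+1} = (\<Sum>i=1..s. bb k i)"
    by (rule sum.reindex_bij_witness[of _ "\<lambda>i. i + s" "\<lambda>t. t - s"]) (auto simp: bsz_def)
  finally have "st (bsz k s) (2*s+1) = (\<Sum>i=1..s. bb k i) + (bsz k s s + (\<Sum>i=1..s. bb k i))" .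
  moreover have "bsz k s s = 2*k" by (simp add: bsz_def)
  ultimately show ?thesis by linarith
qed

lemma int_aux: "2*((2*a - i) div 2) + i = 2*a - i mod 2" for a i :: int by presburger

lemma nstar_eq:
  assumes s: "s = nat \<lfloor>sqrt (real k / 2)\<rfloor>" and s2: "2*s^2 \<le> k"
  shows "nstar k = 2*k + 2*(\<Sum>i=1..s. bb k i)"
proof -
  have "(\<Sum>i = 1..s. 2 * ((2 * int k - 2 * int i ^ 2 - int i) div 2) + int i) = (\<Sum>i=1..s. int (bb k i))"
  proof (rule sum.cong)
    fix i assume i: "i \<in> {1..s}"
    then have "2*i^2 \<le> k" using idx_ok[OF _ s2, of i] by auto
    moreover have "1 \<le> i^2" using i by simp
    moreover have "i mod 2 \<le> 1" by simp
    ultimately have le: "2*i^2 + i mod 2 \<le> 2*k" by linarith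
    have "2 * int k - 2 * int i ^ 2 - int i = 2 * (int k - int i ^ 2) - int i" by simp
    then have "2 * ((2 * int k - 2 * int i ^ 2 - int i) div 2) + int i = 2 * (int k - int i ^ 2) - int i mod 2"
      using int_aux by presburger
    also have "\<dots> = int (bb k i)" unfolding bb_def using le by (simp add: of_nat_diff zmod_int)
    finally show "2 * ((2 * int k - 2 * int i ^ 2 - int i) div 2) + int i = int (bb k i)" .
  qed simp
  also have "\<dots> = int (\<Sum>i=1..s. bb k i)" by (simp only: of_nat_sum)
  finally have h: "(\<Sum>i = 1..s. 2 * ((2 * int k - 2 * int i ^ 2 - int i) div 2) + int i) = int (\<Sum>i=1..s. bb k i)" .
  have h2: "2 * int k + 2 * int (\<Sum>i=1..s. bb k i) = int (2*k + 2*(\<Sum>i=1..s. bb k i))" by simp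
  show ?thesis unfolding nstar_def s[symmetric] h h2 nat_int ..
qed



lemma sqrt_facts:
  assumes s: "s = nat \<lfloor>sqrt (real k / 2)\<rfloor>"
  shows "2*s^2 \<le> k" "k + 1 \<le> 2*(s+1)^2"
proof -
  define x where "x = sqrt (real k / 2)"
  have x0: "x \<ge> 0" unfolding x_def by simp
  have rs: "real s = of_int \<lfloor>x\<rfloor>" unfolding s x_def[symmetric] using x0 by simp
  have le: "real s \<le> x" unfolding rs by simp
  have lt: "x < real s + 1" unfolding rs by linarith
  have xx: "x^2 = real k / 2" unfolding x_def by simp
  have "(real s)^2 \<le> x^2" using le by (simp add: power_mono)
  then have "real (2*s^2) \<le> real k" using xx by simp
  then show "2*s^2 \<le> k" by (simp only: of_nat_le_iff)
  have "x^2 < (real s + 1)^2" using lt x0 by (simp add: power_strict_mono)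
  moreover have "real (2*(s+1)^2) = 2*(real s + 1)^2" by simp
  ultimately have "real k < real (2*(s+1)^2)" using xx by linarith
  then have "k < 2*(s+1)^2" by (simp only: of_nat_less_iff)
  then show "k + 1 \<le> 2*(s+1)^2" by linarith
qed

lemma cube_bound:
  fixes K S N :: real
  assumes K: "K \<ge> 7" and S: "K + 1 \<le> 2*S^2" "S \<ge> 0" and N: "N \<ge> 2*(K-1)*S"
  shows "K^3 \<le> N^2"
proof -
  have M0: "2*(K-1)*S \<ge> 0" using K S by simp
  have "(2*(K-1)*S)^2 \<le> N^2" using N M0 by (simp add: power_mono)
  moreover have "(2*(K-1)*S)^2 = 2*(K-1)^2 * (2*S^2)" by (simp add: algebra_simps power2_eq_square)
  moreover have "2*(K-1)^2 * (K+1) \<le> 2*(K-1)^2 * (2*S^2)" using S by (intro mult_left_mono) auto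
  moreover have "K^3 \<le> 2*(K-1)^2 * (K+1)"
  proof -
    have a: "K^2*(K-2) \<ge> K^2*5" using K by (intro mult_left_mono) auto
    have b: "K^2 \<ge> 7*K" using K by (simp add: power2_eq_square)
    have "2*(K-1)^2 * (K+1) - K^3 = K^2*(K-2) - 2*K + 2" by (simp add: algebra_simps power2_eq_square power3_eq_cube)
    then show ?thesis using a b K by linarith
  qed
  ultimately show ?thesis by linarith
qed

theorem mainTheorem14:
  fixes k :: nat
  assumes "k \<ge> 7"
  shows "c_const (nstar k) \<ge> 1/4 + 1 / (8 * real (nstar k) powr (2/3) - 4)"
proof -
  have k: "k \<ge> 7" by fact
  define s where "s = nat \<lfloor>sqrt (real k / 2)\<rfloor>"
  note sf = sqrt_facts[OF s_def]
  define N where "N = nstar k"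
  have Neq: "N = 2*k + 2*(\<Sum>i=1..s. bb k i)" unfolding N_def by (rule nstar_eq[OF s_def sf(1)])
  have Nst: "st (bsz k s) (2*s+1) = N" unfolding Neq by (rule inst_sum)
  obtain F :: "(nat \<Rightarrow> nat set) set" and sel where
    Fp: "finite F" "F \<noteq> {}" "\<forall>i j. i < j \<longrightarrow> j < N \<longrightarrow> cc k * card F \<le> card {f\<in>F. sel f i \<and> \<not> sel f j}"
    using block_family[of "2*s+1" "rsz k s" "bsz k s" "cc k"] inst_rb[OF k sf(1)] inst_W[OF k sf(1)] inst_X[OF k sf(1)]
    unfolding Nst by blast
  have cc0: "cc k \<ge> 0" using k by simp
  have N2: "N \<ge> 2" using Neq k by simp
  have lower: "cc k \<le> c_const N"
  proof (rule c_const_ge[OF N2 cc0])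
    fix V A w assume wd: "weighted_digraph V A w" and ac: "acyclic A" and lp: "longest_path_has V A N"
    have bnd: "\<forall>p. is_dipath V A p \<longrightarrow> length p \<le> N" using lp unfolding longest_path_has_def by blast
    show "cc k * total_weight A w \<le> mac V A w"
      by (rule averaging[OF wd ac bnd Fp(1) Fp(2), where sel = sel]) (use Fp(3) in blast)
  qed
  have sumlb: "s * (k - 1) \<le> (\<Sum>i=1..s. bb k i)"
  proof -
    have "\<forall>i\<in>{1..s}. k - 1 \<le> bb k i"
    proof
      fix i assume i: "i \<in> {1..s}"
      then have "2*i^2 \<le> k" using idx_ok[OF _ sf(1), of i] by auto
      then show "k - 1 \<le> bb k i" using bb_facts(4)[of i k] i k by auto
    qed
    then show ?thesis using sum_bounded_below[of "{1..s}" "k - 1" "bb k"] by simp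
  qed
  have Nlb: "real N \<ge> 2*(real k - 1)*(real s + 1)"
  proof -
    have "real (s * (k - 1)) \<le> real (\<Sum>i=1..s. bb k i)" using sumlb by (simp only: of_nat_le_iff)
    then have "real s * (real k - 1) \<le> real (\<Sum>i=1..s. bb k i)" using k by (simp add: of_nat_diff)
    then show ?thesis unfolding Neq by (simp add: algebra_simps)
  qed
  have Sf: "real k + 1 \<le> 2*(real s + 1)^2"
  proof -
    have "real (k + 1) \<le> real (2*(s+1)^2)" using sf(2) by (simp only: of_nat_le_iff)
    moreover have "real (k + 1) = real k + 1" "real (2*(s+1)^2) = 2*(real s + 1)^2" by simp_all
    ultimately show ?thesis by linarith
  qed
  have cube: "(real k)^3 \<le> (real N)^2" by (rule cube_bound) (use k Sf Nlb in auto)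
  have kpos: "real k > 0" using k by simp
  have Npos: "real N > 0" using N2 by simp
  have kle: "real k \<le> real N powr (2/3)"
  proof -
    have c3: "real k ^ 3 = real k powr (3::real)" using powr_realpow[OF kpos, of 3] by simp
    have "((real k) ^ 3) powr (1/3) = real k powr (3 * (1/3))" unfolding c3 by (rule powr_powr)
    also have "\<dots> = real k" using kpos by simp
    finally have e1: "((real k) ^ 3) powr (1/3) = real k" .
    have n2: "real N ^ 2 = real N powr (2::real)" using powr_realpow[OF Npos, of 2] by simp
    have e2: "((real N) ^ 2) powr (1/3) = real N powr (2/3)" unfolding n2 powr_powr by simp
    have "((real k)^3) powr (1/3) \<le> ((real N)^2) powr (1/3)"
      using cube by (intro powr_mono2) auto
    then show ?thesis unfolding e1 e2 .
  qed
  have ccval: "cc k = 1/4 + 1/(8 * real k - 4)" using k by (simp add: field_simps)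
  have "1 / (8 * real N powr (2/3) - 4) \<le> 1/(8 * real k - 4)"
    by (rule frac_le) (use kle k in auto)
  then have "1/4 + 1 / (8 * real N powr (2/3) - 4) \<le> cc k" unfolding ccval by simp
  then show ?thesis using lower unfolding N_def by simp
qed

end
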